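(* Let $Z\subset\mathbb{S}_1$ be a finite nonempty set of points. Then the following are equivalent: (i) $Z=\{Q\}$ for a single point $Q\in E_1$; (ii) $\alpha(Z)=\alpha(2Z)=\alpha(3Z)=\alpha(4Z)=\alpha(5Z)=1$.
   Context: Let $P_1\in\mathbb{P}^2(\mathbb{C})$ be a point and $f\colon\mathbb{S}_1\to\mathbb{P}^2$ the blow-up of $\mathbb{P}^2$ at $P_1$, with exceptional curve $E_1=f^{-1}(P_1)$; let $H$ be the pullback of the class of a line. Let $\mathbb{L}_1=3H-E_1=-K_{\mathbb{S}_1}$. For a finite set $Z\subset\mathbb{S}_1$ with ideal sheaf $\mathcal{I}_Z$ and a positive integer $m$, the initial degree is $\alpha(mZ)=\min\{d\ge 0:\ H^0(\mathbb{S}_1,d\mathbb{L}_1\otimes\mathcal{I}_Z^{(m)})\neq 0\}$, i.e. the least $d$ such that some effective divisor $D\in|d\mathbb{L}_1|$ has multiplicity at least $m$ at every point of $Z$. *)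

theory Defs
  imports "HOL-Analysis.Analysis"
begin

typedef nzvec = "{x :: complex^3. x \<noteq> 0}" morphisms vec_of Abs_nzvec
  by (rule exI[of _ "1"]) simp

definition proj_rel :: "nzvec \<Rightarrow> nzvec \<Rightarrow> bool" where
  "proj_rel x y \<longleftrightarrow> (\<exists>c::complex. c \<noteq> 0 \<and> vec_of x = c *s vec_of y)"

lemma proj_rel_equivp: "equivp proj_rel"
proof (rule equivpI)
  show "reflp proj_rel" unfolding reflp_def proj_rel_def
    by (metis one_neq_zero vector_smult_lid)
  show "symp proj_rel" unfolding symp_def proj_rel_def
    by (metis nonzero_imp_inverse_nonzero vector_smult_assoc left_inverse vector_smult_lid)
  show "transp proj_rel" unfolding transp_def proj_rel_def
    by (metis mult_eq_0_iff vector_smult_assoc)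
qed

quotient_type proj2 = nzvec / proj_rel
  by (rule proj_rel_equivp)

definition rep :: "proj2 \<Rightarrow> complex^3" where
  "rep P = vec_of (rep_proj2 P)"

definition dotc :: "complex^3 \<Rightarrow> complex^3 \<Rightarrow> complex" where
  "dotc a b = a$1 * b$1 + a$2 * b$2 + a$3 * b$3"

definition on_line :: "proj2 \<Rightarrow> proj2 \<Rightarrow> bool" where
  "on_line x l \<longleftrightarrow> dotc (rep l) (rep x) = 0"

definition det3 :: "complex^3 \<Rightarrow> complex^3 \<Rightarrow> complex^3 \<Rightarrow> complex" where
  "det3 a b c =
     a$1 * (b$2 * c$3 - b$3 * c$2) - a$2 * (b$1 * c$3 - b$3 * c$1) + a$3 * (b$1 * c$2 - b$2 * c$1)"

text \<open>Model of the blow-up as the incidence variety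
  S_1 = {(x, l) in P^2 x (P^2)^dual : x in l, P_1 in l}; the blow-down map is the first
  projection, and the exceptional curve is E_1 = {(P_1, l) : P_1 in l}.\<close>
definition S1 :: "proj2 \<Rightarrow> (proj2 \<times> proj2) set" where
  "S1 P1 = {(x, l). on_line x l \<and> on_line P1 l}"

definition E1 :: "proj2 \<Rightarrow> (proj2 \<times> proj2) set" where
  "E1 P1 = {(x, l). x = P1 \<and> on_line P1 l}"

text \<open>A ternary form given by its coefficients: c i j k is the coefficient of x^i y^j z^k.\<close>
definition homog :: "nat \<Rightarrow> (nat \<Rightarrow> nat \<Rightarrow> nat \<Rightarrow> complex) \<Rightarrow> bool" where
  "homog n c \<longleftrightarrow> (\<forall>i j k. c i j k \<noteq> 0 \<longrightarrow> i + j + k = n)"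

definition evalF :: "nat \<Rightarrow> (nat \<Rightarrow> nat \<Rightarrow> nat \<Rightarrow> complex) \<Rightarrow> complex^3 \<Rightarrow> complex" where
  "evalF n c x = (\<Sum>i\<le>n. \<Sum>j\<le>n. \<Sum>k\<le>n. c i j k * (x$1)^i * (x$2)^j * (x$3)^k)"

definition mult_ge0 :: "(complex \<Rightarrow> complex \<Rightarrow> complex) \<Rightarrow> nat \<Rightarrow> bool" where
  "mult_ge0 g m \<longleftrightarrow> (\<exists>(N::nat) (a :: nat \<Rightarrow> nat \<Rightarrow> complex).
      (\<forall>s t. g s t = (\<Sum>i\<le>N. \<Sum>j\<le>N. a i j * s^i * t^j)) \<and>
      (\<forall>i j. i + j < m \<longrightarrow> a i j = 0))"

definition mult_P2_ge :: "nat \<Rightarrow> (nat \<Rightarrow> nat \<Rightarrow> nat \<Rightarrow> complex) \<Rightarrow> proj2 \<Rightarrow> nat \<Rightarrow> bool" where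
  "mult_P2_ge n c p m \<longleftrightarrow>
     (\<forall>e1 e2. det3 (rep p) e1 e2 \<noteq> 0 \<longrightarrow>
        mult_ge0 (\<lambda>a b. evalF n c (rep p + a *s e1 + b *s e2)) m)"

text \<open>The divisor D = f^*(V(F)) - d E_1 in |d L_1| (F a form of degree 3d with multiplicity
  at least d at P_1) has multiplicity at least m at the point Q = (x,l) of S_1.
  Off E_1, D agrees with V(F).  At Q = (P_1, l) on E_1 we use the blow-up chart
  (s,t) |-> (P_1 + s (q + t w), line through P_1 and q + t w), with q on l, in which
  E_1 = {s = 0}; the local equation of f^*(V(F)) is F(v + s q + s t w) = s^d h(s,t),
  where h is the local equation of D, so mult_Q D >= m iff this has multiplicity >= m + d.\<close>
definition mult_S1_ge ::
  "proj2 \<Rightarrow> nat \<Rightarrow> (nat \<Rightarrow> nat \<Rightarrow> nat \<Rightarrow> complex) \<Rightarrow> proj2 \<times> proj2 \<Rightarrow> nat \<Rightarrow> bool" where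
  "mult_S1_ge P1 d c Q m =
     (if fst Q \<noteq> P1 then mult_P2_ge (3*d) c (fst Q) m
      else (\<forall>q w. dotc (rep (snd Q)) q = 0 \<longrightarrow> det3 (rep P1) q w \<noteq> 0 \<longrightarrow>
              mult_ge0 (\<lambda>s t. evalF (3*d) c (rep P1 + s *s q + (s*t) *s w)) (m + d)))"

text \<open>Nonzero sections of d L_1 = d(3H - E_1): nonzero forms of degree 3d with multiplicity
  at least d at P_1 (each defines the effective divisor f^*(V(F)) - d E_1 in |d L_1|).\<close>
definition section_dL1 :: "proj2 \<Rightarrow> nat \<Rightarrow> (nat \<Rightarrow> nat \<Rightarrow> nat \<Rightarrow> complex) \<Rightarrow> bool" where
  "section_dL1 P1 d c \<longleftrightarrow> homog (3*d) c \<and> (\<exists>i j k. c i j k \<noteq> 0) \<and> mult_P2_ge (3*d) c P1 d"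

definition alpha :: "proj2 \<Rightarrow> (proj2 \<times> proj2) set \<Rightarrow> nat \<Rightarrow> nat" where
  "alpha P1 Z m = (LEAST d. \<exists>c. section_dL1 P1 d c \<and> (\<forall>Q\<in>Z. mult_S1_ge P1 d c Q m))"

end

theory Submission
  imports Defs "HOL-Computational_Algebra.Polynomial"
begin


lemma rep_nz: "rep P \<noteq> 0"
  unfolding rep_def using vec_of by auto

lemma rep_prop_eq:
  assumes "rep l1 = mu *s rep l2" shows "l1 = l2"
proof -
  have "mu \<noteq> 0" using assms rep_nz[of l1] by auto
  then have "proj_rel (rep_proj2 l1) (rep_proj2 l2)"
    using assms unfolding proj_rel_def rep_def by auto
  then show ?thesis using Quotient3_rel_rep[OF Quotient3_proj2] by blast
qed

definition crs :: "complex^3 \<Rightarrow> complex^3 \<Rightarrow> complex^3" where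
  "crs a b = vector [a$2*b$3 - a$3*b$2, a$3*b$1 - a$1*b$3, a$1*b$2 - a$2*b$1]"

definition cnjv :: "complex^3 \<Rightarrow> complex^3" where
  "cnjv a = vector [cnj (a$1), cnj (a$2), cnj (a$3)]"

lemma dotc_comm: "dotc a b = dotc b a"
  unfolding dotc_def by (simp add: mult.commute)

lemma dotc_crs: "dotc a (crs a z) = 0"
  unfolding dotc_def crs_def by (simp add: algebra_simps)

lemma det3_crs: "det3 x y z = dotc (crs x y) z"
  unfolding dotc_def crs_def det3_def by (simp add: algebra_simps)

lemma det3_crs2: "det3 v (crs a z) y = dotc v z * dotc a y - dotc v a * dotc z y"
  unfolding dotc_def crs_def det3_def by (simp add: algebra_simps)

lemma dotc_cnjv: assumes "v \<noteq> 0" shows "dotc v (cnjv v) \<noteq> 0"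
proof
  assume h: "dotc v (cnjv v) = 0"
  have e: "\<And>z::complex. z * cnj z = complex_of_real ((cmod z)^2)"
    by (metis complex_norm_square)
  have "complex_of_real ((cmod (v$1))^2 + (cmod (v$2))^2 + (cmod (v$3))^2) = 0"
    using h unfolding dotc_def cnjv_def by (simp add: e)
  then have "(cmod (v$1))^2 + (cmod (v$2))^2 + (cmod (v$3))^2 = 0"
    by (simp only: of_real_eq_0_iff)
  then have "v$1 = 0 \<and> v$2 = 0 \<and> v$3 = 0"
    by (smt (verit) norm_eq_zero power2_less_eq_zero_iff zero_le_power2)
  then have "v = 0" by (simp add: vec_eq_iff forall_3)
  with assms show False by simp
qed

lemma dotc_add: "dotc a (x + y) = dotc a x + dotc a y"
  unfolding dotc_def by (simp add: algebra_simps)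
lemma dotc_smult: "dotc a (c *s x) = c * dotc a x"
  unfolding dotc_def by (simp add: algebra_simps)

lemma crs_add: "crs a (x + y) = crs a x + crs a y"
  unfolding crs_def by (simp add: vec_eq_iff forall_3 algebra_simps)
lemma crs_smult: "crs a (c *s x) = c *s crs a x"
  unfolding crs_def by (simp add: vec_eq_iff forall_3 algebra_simps)
lemma crs_self: "crs a a = 0"
  unfolding crs_def by (simp add: vec_eq_iff forall_3 algebra_simps)

lemma crs_nz_exists: assumes "X \<noteq> 0" shows "\<exists>z. crs X z \<noteq> 0"
proof (rule ccontr)
  assume "\<not> ?thesis"
  then have "crs X (vector [1,0,0]) = 0" "crs X (vector [0,1,0]) = 0" by auto
  then have "X$1 = 0 \<and> X$2 = 0 \<and> X$3 = 0"
    unfolding crs_def by (auto simp: vec_eq_iff forall_3)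
  then have "X = 0" by (simp add: vec_eq_iff forall_3)
  with assms show False by simp
qed

lemma cramer:
  assumes "det3 v q w \<noteq> 0"
  shows "y = (det3 y q w / det3 v q w) *s v + (det3 v y w / det3 v q w) *s q
             + (det3 v q y / det3 v q w) *s w"
proof -
  have id: "det3 y q w * v$r + det3 v y w * q$r + det3 v q y * w$r = det3 v q w * y$r"
    if "r = 1 \<or> r = 2 \<or> r = 3" for r
    using that unfolding det3_def by (elim disjE) (simp_all add: algebra_simps)
  show ?thesis
    using id[of 1] id[of 2] id[of 3] assms
    by (simp add: vec_eq_iff forall_3 field_simps)
qed

lemma ker_prop:
  assumes "a \<noteq> 0" and "\<forall>y. dotc a y = 0 \<longleftrightarrow> dotc b y = 0"
  shows "\<exists>mu. b = mu *s a"
proof -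
  have k: "dotc b y = 0" if "dotc a y = 0" for y using assms that by blast
  have c1: "a$1*b$2 = a$2*b$1" using k[of "vector [a$2, -a$1, 0]"] unfolding dotc_def by (simp add: algebra_simps)
  have c2: "a$1*b$3 = a$3*b$1" using k[of "vector [a$3, 0, -a$1]"] unfolding dotc_def by (simp add: algebra_simps)
  have c3: "a$2*b$3 = a$3*b$2" using k[of "vector [0, a$3, -a$2]"] unfolding dotc_def by (simp add: algebra_simps)
  have "a$1 \<noteq> 0 \<or> a$2 \<noteq> 0 \<or> a$3 \<noteq> 0" using assms(1) by (auto simp: vec_eq_iff forall_3)
  then show ?thesis
  proof (elim disjE)
    assume h: "a$1 \<noteq> 0"
    show ?thesis by (rule exI[of _ "b$1 / a$1"]) (use h c1 c2 in \<open>simp add: vec_eq_iff forall_3 field_simps\<close>)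
  next
    assume h: "a$2 \<noteq> 0"
    show ?thesis by (rule exI[of _ "b$2 / a$2"]) (use h c1 c3 in \<open>simp add: vec_eq_iff forall_3 field_simps\<close>)
  next
    assume h: "a$3 \<noteq> 0"
    show ?thesis by (rule exI[of _ "b$3 / a$3"]) (use h c2 c3 in \<open>simp add: vec_eq_iff forall_3 field_simps\<close>)
  qed
qed



definition mon2 :: "nat \<times> nat \<Rightarrow> complex \<Rightarrow> complex \<Rightarrow> complex" where
  "mon2 p s t = s ^ fst p * t ^ snd p"

definition rep2 :: "(complex \<Rightarrow> complex \<Rightarrow> complex) \<Rightarrow> (nat \<times> nat) set \<Rightarrow> bool" where
  "rep2 g S \<longleftrightarrow> (\<exists>A a. finite A \<and> A \<subseteq> S \<and> (\<forall>s t. g s t = (\<Sum>p\<in>A. a p * mon2 p s t)))"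

definition psum :: "(nat \<times> nat) set \<Rightarrow> (nat \<times> nat) set \<Rightarrow> (nat \<times> nat) set" where
  "psum S T = {(i1+i2, j1+j2) | i1 j1 i2 j2. (i1,j1) \<in> S \<and> (i2,j2) \<in> T}"

lemma rep2_ext: "rep2 f S \<Longrightarrow> (\<And>s t. g s t = f s t) \<Longrightarrow> rep2 g S"
  unfolding rep2_def by metis

lemma rep2_mono: "rep2 f S \<Longrightarrow> S \<subseteq> T \<Longrightarrow> rep2 f T"
  unfolding rep2_def by blast

lemma rep2_zero: "rep2 (\<lambda>s t. 0) S"
  unfolding rep2_def by (rule exI[of _ "{}"]) auto

lemma rep2_monom: "rep2 (\<lambda>s t. c * s^i * t^j) {(i,j)}"
  unfolding rep2_def
  by (rule exI[of _ "{(i,j)}"], rule exI[of _ "\<lambda>_. c"]) (simp add: mon2_def mult.assoc)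

lemma rep2_cmult: "rep2 f S \<Longrightarrow> rep2 (\<lambda>s t. c * f s t) S"
  unfolding rep2_def
proof (elim exE conjE)
  fix A a assume h: "finite A" "A \<subseteq> S" "\<forall>s t. f s t = (\<Sum>p\<in>A. a p * mon2 p s t)"
  show "\<exists>A a. finite A \<and> A \<subseteq> S \<and> (\<forall>s t. c * f s t = (\<Sum>p\<in>A. a p * mon2 p s t))"
    by (rule exI[of _ A], rule exI[of _ "\<lambda>p. c * a p"]) (simp add: h sum_distrib_left mult.assoc)
qed

lemma rep2_add:
  assumes "rep2 f S" "rep2 g T" shows "rep2 (\<lambda>s t. f s t + g s t) (S \<union> T)"
proof -
  obtain A a where A: "finite A" "A \<subseteq> S" "\<forall>s t. f s t = (\<Sum>p\<in>A. a p * mon2 p s t)"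
    using assms(1) unfolding rep2_def by blast
  obtain B b where B: "finite B" "B \<subseteq> T" "\<forall>s t. g s t = (\<Sum>p\<in>B. b p * mon2 p s t)"
    using assms(2) unfolding rep2_def by blast
  define a' where "a' p = (if p \<in> A then a p else 0)" for p
  define b' where "b' p = (if p \<in> B then b p else 0)" for p
  have ea: "(\<Sum>p\<in>A \<union> B. a' p * mon2 p s t) = f s t" for s t
  proof -
    have "(\<Sum>p\<in>A \<union> B. a' p * mon2 p s t) = (\<Sum>p\<in>A. a' p * mon2 p s t)"
      by (rule sum.mono_neutral_right) (auto simp: A B a'_def)
    also have "\<dots> = f s t" by (simp add: a'_def A)
    finally show ?thesis .
  qed
  have eb: "(\<Sum>p\<in>A \<union> B. b' p * mon2 p s t) = g s t" for s t
  proof -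
    have "(\<Sum>p\<in>A \<union> B. b' p * mon2 p s t) = (\<Sum>p\<in>B. b' p * mon2 p s t)"
      by (rule sum.mono_neutral_right) (auto simp: A B b'_def)
    also have "\<dots> = g s t" by (simp add: b'_def B)
    finally show ?thesis .
  qed
  show ?thesis unfolding rep2_def
    by (rule exI[of _ "A \<union> B"], rule exI[of _ "\<lambda>p. a' p + b' p"])
       (use A B ea eb in \<open>auto simp: distrib_right sum.distrib\<close>)
qed

lemma rep2_sum:
  assumes "finite I" "\<forall>i\<in>I. rep2 (f i) S"
  shows "rep2 (\<lambda>s t. \<Sum>i\<in>I. f i s t) S"
  using assms
proof (induction I rule: finite_induct)
  case empty then show ?case by (simp add: rep2_zero)
next
  case (insert x F)
  then have "rep2 (\<lambda>s t. f x s t + (\<Sum>i\<in>F. f i s t)) (S \<union> S)"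
    by (intro rep2_add) auto
  then show ?case using insert by simp
qed

lemma rep2_mult:
  assumes "rep2 f S" "rep2 g T"
  shows "rep2 (\<lambda>s t. f s t * g s t) (psum S T)"
proof -
  obtain A a where A: "finite A" "A \<subseteq> S" "\<forall>s t. f s t = (\<Sum>p\<in>A. a p * mon2 p s t)"
    using assms(1) unfolding rep2_def by blast
  obtain B b where B: "finite B" "B \<subseteq> T" "\<forall>s t. g s t = (\<Sum>p\<in>B. b p * mon2 p s t)"
    using assms(2) unfolding rep2_def by blast
  define pa where "pa x = (fst (fst x) + fst (snd x), snd (fst x) + snd (snd x))"
    for x :: "(nat \<times> nat) \<times> (nat \<times> nat)"
  define C where "C = pa ` (A \<times> B)"
  define e where "e z = (\<Sum>x\<in>A \<times> B. if pa x = z then a (fst x) * b (snd x) else 0)" for z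
  have fC: "finite C" using A B by (simp add: C_def)
  have mon: "mon2 (pa x) s t = mon2 (fst x) s t * mon2 (snd x) s t" for x s t
    by (simp add: mon2_def pa_def power_add algebra_simps)
  have "f s t * g s t = (\<Sum>z\<in>C. e z * mon2 z s t)" for s t
  proof -
    have "f s t * g s t = (\<Sum>p\<in>A. \<Sum>q\<in>B. (a p * mon2 p s t) * (b q * mon2 q s t))"
      using A(3) B(3) by (simp add: sum_product)
    also have "\<dots> = (\<Sum>x\<in>A \<times> B. a (fst x) * b (snd x) * mon2 (pa x) s t)"
      by (simp add: sum.cartesian_product mon case_prod_beta algebra_simps)
    also have "\<dots> = (\<Sum>x\<in>A \<times> B. \<Sum>z\<in>C. if pa x = z then a (fst x) * b (snd x) * mon2 z s t else 0)"
    proof (rule sum.cong)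
      fix x assume x: "x \<in> A \<times> B"
      then have "pa x \<in> C" by (simp add: C_def)
      then show "a (fst x) * b (snd x) * mon2 (pa x) s t =
        (\<Sum>z\<in>C. if pa x = z then a (fst x) * b (snd x) * mon2 z s t else 0)"
        by (simp add: sum.delta'[OF fC])
    qed simp
    also have "\<dots> = (\<Sum>z\<in>C. \<Sum>x\<in>A \<times> B. if pa x = z then a (fst x) * b (snd x) * mon2 z s t else 0)"
      by (rule sum.swap)
    also have "\<dots> = (\<Sum>z\<in>C. e z * mon2 z s t)"
      by (rule sum.cong) (auto simp: e_def sum_distrib_right intro!: sum.cong)
    finally show ?thesis .
  qed
  moreover have "C \<subseteq> psum S T"
    using A(2) B(2) unfolding C_def psum_def pa_def by force
  ultimately show ?thesis unfolding rep2_def using fC by blast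
qed

lemma rep2_const: "rep2 (\<lambda>s t. c) {(0,0)}"
  using rep2_monom[of c 0 0] by simp

lemma rep2_pow_fam:
  assumes fam: "\<And>a b. psum (Fam a) (Fam b) \<subseteq> Fam (a + b)" and z: "(0,0) \<in> Fam 0"
    and "rep2 f (Fam k)"
  shows "rep2 (\<lambda>s t. (f s t) ^ p) (Fam (p * k))"
proof (induction p)
  case 0 then show ?case using rep2_mono[OF rep2_const[of 1]] z by simp
next
  case (Suc p)
  have "rep2 (\<lambda>s t. f s t * f s t ^ p) (psum (Fam k) (Fam (p * k)))"
    by (rule rep2_mult[OF assms(3) Suc])
  then show ?case using fam[of k "p*k"] by (auto elim!: rep2_mono)
qed

lemma rep2_prod_fam:
  assumes fam: "\<And>a b. psum (Fam a) (Fam b) \<subseteq> Fam (a + b)" and z: "(0,0) \<in> Fam 0"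
    and "finite I" "\<forall>i\<in>I. rep2 (f i) (Fam (k i))"
  shows "rep2 (\<lambda>s t. \<Prod>i\<in>I. f i s t) (Fam (\<Sum>i\<in>I. k i))"
  using assms(3,4)
proof (induction I rule: finite_induct)
  case empty then show ?case using rep2_mono[OF rep2_const[of 1]] z by simp
next
  case (insert x F)
  then have "rep2 (\<lambda>s t. f x s t * (\<Prod>i\<in>F. f i s t)) (psum (Fam (k x)) (Fam (\<Sum>i\<in>F. k i)))"
    by (intro rep2_mult) auto
  then show ?case using insert fam[of "k x" "\<Sum>i\<in>F. k i"] by (auto elim!: rep2_mono)
qed

lemma uz2:
  assumes "\<forall>s t. (\<Sum>p\<in>{..K} \<times> {..K}. c p * mon2 p s t) = 0"
  shows "\<forall>p\<in>{..K} \<times> {..K}. c p = 0"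
proof -
  have e: "(\<Sum>p\<in>{..K} \<times> {..K}. c p * mon2 p s t) = (\<Sum>i\<le>K. (\<Sum>j\<le>K. c (i,j) * t^j) * s^i)" for s t
  proof -
    have "(\<Sum>p\<in>{..K} \<times> {..K}. c p * mon2 p s t) = (\<Sum>i\<le>K. \<Sum>j\<le>K. c (i,j) * mon2 (i,j) s t)"
      by (simp add: sum.cartesian_product)
    also have "\<dots> = (\<Sum>i\<le>K. (\<Sum>j\<le>K. c (i,j) * t^j) * s^i)"
      by (simp add: sum_distrib_right sum_distrib_left mon2_def algebra_simps)
    finally show ?thesis .
  qed
  have "\<forall>i\<le>K. (\<Sum>j\<le>K. c (i,j) * t^j) = 0" for t
    using assms e Transcendental.polyfun_eq_0[of "\<lambda>i. \<Sum>j\<le>K. c (i,j) * t^j" K] by auto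
  then have "\<forall>t. (\<Sum>j\<le>K. c (i,j) * t^j) = 0" if "i \<le> K" for i using that by auto
  then have "\<forall>j\<le>K. c (i,j) = 0" if "i \<le> K" for i
    using that Transcendental.polyfun_eq_0[of "\<lambda>j. c (i,j)" K] by auto
  then show ?thesis by auto
qed

lemma finite_box: "finite (A :: (nat \<times> nat) set) \<Longrightarrow> \<exists>K. A \<subseteq> {..K} \<times> {..K}"
proof -
  assume "finite A"
  then obtain K1 where "\<forall>x\<in>fst ` A. x \<le> K1" using finite_nat_set_iff_bounded_le by blast
  moreover obtain K2 where "\<forall>x\<in>snd ` A. x \<le> K2" using \<open>finite A\<close> finite_nat_set_iff_bounded_le by blast
  ultimately have "A \<subseteq> {..max K1 K2} \<times> {..max K1 K2}" by force
  then show ?thesis by blast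
qed

lemma rep2_inter:
  assumes "rep2 g S" "rep2 g T" shows "rep2 g (S \<inter> T)"
proof -
  obtain A a where A: "finite A" "A \<subseteq> S" "\<forall>s t. g s t = (\<Sum>p\<in>A. a p * mon2 p s t)"
    using assms(1) unfolding rep2_def by blast
  obtain B b where B: "finite B" "B \<subseteq> T" "\<forall>s t. g s t = (\<Sum>p\<in>B. b p * mon2 p s t)"
    using assms(2) unfolding rep2_def by blast
  obtain K where K: "A \<union> B \<subseteq> {..K} \<times> {..K}" using finite_box[of "A \<union> B"] A B by auto
  define D where "D = {..K} \<times> {..K}"
  define a' where "a' p = (if p \<in> A then a p else 0)" for p
  define b' where "b' p = (if p \<in> B then b p else 0)" for p
  have ea: "(\<Sum>p\<in>D. a' p * mon2 p s t) = g s t" for s t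
  proof -
    have "(\<Sum>p\<in>D. a' p * mon2 p s t) = (\<Sum>p\<in>A. a' p * mon2 p s t)"
      by (rule sum.mono_neutral_right) (use K in \<open>auto simp: D_def a'_def\<close>)
    also have "\<dots> = g s t" by (simp add: a'_def A)
    finally show ?thesis .
  qed
  have eb: "(\<Sum>p\<in>D. b' p * mon2 p s t) = g s t" for s t
  proof -
    have "(\<Sum>p\<in>D. b' p * mon2 p s t) = (\<Sum>p\<in>B. b' p * mon2 p s t)"
      by (rule sum.mono_neutral_right) (use K in \<open>auto simp: D_def b'_def\<close>)
    also have "\<dots> = g s t" by (simp add: b'_def B)
    finally show ?thesis .
  qed
  have "\<forall>s t. (\<Sum>p\<in>D. (a' p - b' p) * mon2 p s t) = 0"
    using ea eb by (simp add: left_diff_distrib sum_subtractf)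
  then have "\<forall>p\<in>D. a' p - b' p = 0" using uz2[where K=K and c="\<lambda>p. a' p - b' p"] by (simp add: D_def)
  then have ab: "a' p = b' p" for p
  proof (cases "p \<in> D")
    case True then show ?thesis using \<open>\<forall>p\<in>D. a' p - b' p = 0\<close> by auto
  next
    case False then have "p \<notin> A" "p \<notin> B" using K by (auto simp: D_def)
    then show ?thesis by (simp add: a'_def b'_def)
  qed
  define A' where "A' = {p\<in>A. a p \<noteq> 0}"
  have "A' \<subseteq> S \<inter> T"
  proof
    fix p assume "p \<in> A'"
    then have "p \<in> A" "a' p \<noteq> 0" by (auto simp: A'_def a'_def)
    then have "b' p \<noteq> 0" using ab by simp
    then have "p \<in> B" by (auto simp: b'_def split: if_splits)
    then show "p \<in> S \<inter> T" using \<open>p \<in> A\<close> A B by auto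
  qed
  moreover have "g s t = (\<Sum>p\<in>A'. a p * mon2 p s t)" for s t
  proof -
    have "(\<Sum>p\<in>A. a p * mon2 p s t) = (\<Sum>p\<in>A'. a p * mon2 p s t)"
      by (rule sum.mono_neutral_right) (use A in \<open>auto simp: A'_def\<close>)
    then show ?thesis using A by simp
  qed
  moreover have "finite A'" using A by (simp add: A'_def)
  ultimately show ?thesis unfolding rep2_def by blast
qed

lemma rep2_empty: "rep2 g {} \<Longrightarrow> g s t = 0"
  unfolding rep2_def by auto

lemma rep2_single: "rep2 g {(i,j)} \<Longrightarrow> \<exists>A. \<forall>s t. g s t = A * s^i * t^j"
  unfolding rep2_def
proof (elim exE conjE)
  fix A a assume h: "finite A" "A \<subseteq> {(i,j)}" "\<forall>s t. g s t = (\<Sum>p\<in>A. a p * mon2 p s t)"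
  then have "A = {} \<or> A = {(i,j)}" by auto
  then show "\<exists>A. \<forall>s t. g s t = A * s^i * t^j"
  proof
    assume "A = {}" then show ?thesis using h by (intro exI[of _ 0]) auto
  next
    assume "A = {(i,j)}" then show ?thesis using h
      by (intro exI[of _ "a (i,j)"]) (auto simp: mon2_def mult.assoc)
  qed
qed

definition Fm :: "nat \<Rightarrow> (nat \<times> nat) set" where "Fm m = {p. m \<le> fst p + snd p}"
definition Tf :: "nat \<Rightarrow> (nat \<times> nat) set" where "Tf k = {p. fst p + snd p \<le> k}"
definition Wf :: "nat \<Rightarrow> (nat \<times> nat) set" where "Wf k = {p. snd p \<le> fst p \<and> fst p \<le> k}"

lemma Fm_fam: "psum (Fm a) (Fm b) \<subseteq> Fm (a + b)" "(0,0) \<in> Fm 0"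
  unfolding psum_def Fm_def by auto
lemma Tf_fam: "psum (Tf a) (Tf b) \<subseteq> Tf (a + b)" "(0,0) \<in> Tf 0"
  unfolding psum_def Tf_def by auto
lemma Wf_fam: "psum (Wf a) (Wf b) \<subseteq> Wf (a + b)" "(0,0) \<in> Wf 0"
  unfolding psum_def Wf_def by auto

lemma mult_ge0_rep2: "mult_ge0 g m \<longleftrightarrow> rep2 g (Fm m)"
proof
  assume "mult_ge0 g m"
  then obtain N a where h: "\<forall>s t. g s t = (\<Sum>i\<le>N. \<Sum>j\<le>N. a i j * s^i * t^j)"
      "\<forall>i j. i + j < m \<longrightarrow> a i j = 0" unfolding mult_ge0_def by blast
  define A where "A = {p \<in> {..N} \<times> {..N}. m \<le> fst p + snd p}"
  have "g s t = (\<Sum>p\<in>A. a (fst p) (snd p) * mon2 p s t)" for s t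
  proof -
    have "g s t = (\<Sum>p\<in>{..N} \<times> {..N}. a (fst p) (snd p) * mon2 p s t)"
      using h(1) by (simp add: sum.cartesian_product mon2_def case_prod_beta mult.assoc)
    also have "\<dots> = (\<Sum>p\<in>A. a (fst p) (snd p) * mon2 p s t)"
      by (rule sum.mono_neutral_right) (use h(2) in \<open>auto simp: A_def not_less[symmetric]\<close>)
    finally show ?thesis .
  qed
  then show "rep2 g (Fm m)" unfolding rep2_def Fm_def
    by (intro exI[of _ A] exI[of _ "\<lambda>p. a (fst p) (snd p)"]) (auto simp: A_def)
next
  assume "rep2 g (Fm m)"
  then obtain A a where A: "finite A" "A \<subseteq> Fm m" "\<forall>s t. g s t = (\<Sum>p\<in>A. a p * mon2 p s t)"
    unfolding rep2_def by blast
  obtain K where K: "A \<subseteq> {..K} \<times> {..K}" using finite_box A by blast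
  define a' where "a' i j = (if (i,j) \<in> A then a (i,j) else 0)" for i j
  have "g s t = (\<Sum>i\<le>K. \<Sum>j\<le>K. a' i j * s^i * t^j)" for s t
  proof -
    have "(\<Sum>i\<le>K. \<Sum>j\<le>K. a' i j * s^i * t^j) = (\<Sum>p\<in>{..K} \<times> {..K}. a' (fst p) (snd p) * mon2 p s t)"
      by (simp add: sum.cartesian_product mon2_def case_prod_beta mult.assoc)
    also have "\<dots> = (\<Sum>p\<in>A. a' (fst p) (snd p) * mon2 p s t)"
      by (rule sum.mono_neutral_right) (use K A in \<open>auto simp: a'_def\<close>)
    also have "\<dots> = g s t" using A by (simp add: a'_def)
    finally show ?thesis by simp
  qed
  moreover have "\<forall>i j. i + j < m \<longrightarrow> a' i j = 0" using A(2) by (auto simp: a'_def Fm_def)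
  ultimately show "mult_ge0 g m" unfolding mult_ge0_def by blast
qed



definition PF :: "nat \<Rightarrow> (nat \<Rightarrow> nat \<Rightarrow> nat \<Rightarrow> complex) \<Rightarrow> complex^3 \<Rightarrow> complex^3 \<Rightarrow> complex poly" where
  "PF n c x u = (\<Sum>i\<le>n. \<Sum>j\<le>n. \<Sum>k\<le>n.
      smult (c i j k) ([:x$1, u$1:]^i * [:x$2, u$2:]^j * [:x$3, u$3:]^k))"

lemma evalF_PF: "evalF n c (x + s *s u) = poly (PF n c x u) s"
  unfolding evalF_def PF_def
  by (simp add: poly_sum algebra_simps)

lemma perturb:
  assumes "finite Bad" "\<forall>e. e \<notin> Bad \<longrightarrow> evalF n c (y + e *s u) = K"
  shows "evalF n c y = K"
proof -
  let ?P = "PF n c y u - [:K:]"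
  have "?P = 0"
  proof (rule ccontr)
    assume "?P \<noteq> 0"
    then have f: "finite {x. poly ?P x = 0}" by (rule poly_roots_finite)
    have "UNIV - Bad \<subseteq> {x. poly ?P x = 0}" using assms(2) by (auto simp: evalF_PF[symmetric])
    moreover have "infinite (UNIV - Bad)"
      using assms(1) infinite_UNIV_char_0[where 'a=complex] by (simp add: Diff_infinite_finite)
    ultimately show False using f finite_subset by blast
  qed
  then have "PF n c y u = [:K:]" by simp
  then have "poly (PF n c y u) 0 = K" by simp
  then show ?thesis using evalF_PF[of n c y 0 u] by simp
qed

lemma evalF_homog:
  assumes "homog n c"
  shows "evalF n c (mu *s y) = mu^n * evalF n c y"
proof -
  have "c i j k * (mu * y$1)^i * (mu * y$2)^j * (mu * y$3)^k = mu^n * (c i j k * (y$1)^i * (y$2)^j * (y$3)^k)"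
    for i j k
  proof (cases "c i j k = 0")
    case False
    then have "i + j + k = n" using assms by (simp add: homog_def)
    then show ?thesis by (auto simp: power_mult_distrib power_add algebra_simps)
  qed simp
  then have "evalF n c (mu *s y) = (\<Sum>i\<le>n. \<Sum>j\<le>n. \<Sum>k\<le>n. mu^n * (c i j k * (y$1)^i * (y$2)^j * (y$3)^k))"
    unfolding evalF_def vector_smult_component by (intro sum.cong refl)
  then show ?thesis unfolding evalF_def by (simp add: sum_distrib_left)
qed

lemma evalF_zero_coeffs:
  assumes "homog n c" "\<forall>y. evalF n c y = 0"
  shows "c i j k = 0"
proof -
  have e: "evalF n c (vector [x1, x2, x3]) =
     (\<Sum>i\<le>n. (\<Sum>j\<le>n. (\<Sum>k\<le>n. c i j k * x3^k) * x2^j) * x1^i)" for x1 x2 x3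
    unfolding evalF_def by (simp add: sum_distrib_right sum_distrib_left algebra_simps)
  have s1: "\<forall>i\<le>n. (\<Sum>j\<le>n. (\<Sum>k\<le>n. c i j k * x3^k) * x2^j) = 0" for x2 x3
    using assms(2) e Transcendental.polyfun_eq_0[of "\<lambda>i. \<Sum>j\<le>n. (\<Sum>k\<le>n. c i j k * x3^k) * x2^j" n]
    by auto
  have s2: "\<forall>j\<le>n. (\<Sum>k\<le>n. c i j k * x3^k) = 0" if "i \<le> n" for i x3
    using s1 that Transcendental.polyfun_eq_0[of "\<lambda>j. \<Sum>k\<le>n. c i j k * x3^k" n] by auto
  have s3: "c i j k = 0" if "i \<le> n" "j \<le> n" "k \<le> n" for i j k
    using s2 that Transcendental.polyfun_eq_0[of "\<lambda>k. c i j k" n] by auto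
  show ?thesis
  proof (rule ccontr)
    assume "c i j k \<noteq> 0"
    then have "i + j + k = n" using assms(1) by (simp add: homog_def)
    then show False using s3[of i j k] \<open>c i j k \<noteq> 0\<close> by simp
  qed
qed

lemma chart_rep2:
  assumes fam: "\<And>a b. psum (Fam a) (Fam b) \<subseteq> Fam (a + b)" "(0,0) \<in> Fam 0"
    and X: "\<And>r. rep2 (\<lambda>s t. X s t $ r) (Fam 1)"
    and h: "homog n c"
  shows "rep2 (\<lambda>s t. evalF n c (X s t)) (Fam n)"
proof -
  have trm: "rep2 (\<lambda>s t. c i j k * (X s t $ 1)^i * (X s t $ 2)^j * (X s t $ 3)^k) (Fam n)" for i j k
  proof (cases "c i j k = 0")
    case True then show ?thesis by (simp add: rep2_zero)
  next
    case False then have n: "i + j + k = n" using h by (simp add: homog_def)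
    have p1: "rep2 (\<lambda>s t. (X s t $ 1)^i) (Fam i)" using rep2_pow_fam[OF fam X[of 1], of i] by simp
    have p2: "rep2 (\<lambda>s t. (X s t $ 2)^j) (Fam j)" using rep2_pow_fam[OF fam X[of 2], of j] by simp
    have p3: "rep2 (\<lambda>s t. (X s t $ 3)^k) (Fam k)" using rep2_pow_fam[OF fam X[of 3], of k] by simp
    have "rep2 (\<lambda>s t. (X s t $ 1)^i * (X s t $ 2)^j) (Fam (i + j))"
      using rep2_mult[OF p1 p2] fam(1) rep2_mono by blast
    then have "rep2 (\<lambda>s t. (X s t $ 1)^i * (X s t $ 2)^j * (X s t $ 3)^k) (Fam (i + j + k))"
      using rep2_mult[OF _ p3] fam(1) rep2_mono by blast
    then have "rep2 (\<lambda>s t. c i j k * ((X s t $ 1)^i * (X s t $ 2)^j * (X s t $ 3)^k)) (Fam n)"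
      using n rep2_cmult by blast
    then show ?thesis by (rule rep2_ext) (simp add: mult.assoc)
  qed
  show ?thesis unfolding evalF_def
    by (intro rep2_sum ballI finite_atMost trm)
qed



lemma rep_one: "\<exists>c. homog 0 c \<and> (\<forall>y. evalF 0 c y = 1)"
  by (rule exI[of _ "\<lambda>i j k. if i = 0 \<and> j = 0 \<and> k = 0 then 1 else 0"])
     (simp add: homog_def evalF_def)

lemma rep_lin: "\<exists>c. homog 1 c \<and> (\<forall>y. evalF 1 c y = dotc a y)"
  by (rule exI[of _ "\<lambda>i j k. if i = 1 \<and> j = 0 \<and> k = 0 then a$1 else
       if i = 0 \<and> j = 1 \<and> k = 0 then a$2 else if i = 0 \<and> j = 0 \<and> k = 1 then a$3 else 0"])
     (auto simp: homog_def evalF_def dotc_def)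

definition mon3 :: "nat \<times> nat \<times> nat \<Rightarrow> complex^3 \<Rightarrow> complex" where
  "mon3 p y = (y$1)^(fst p) * (y$2)^(fst (snd p)) * (y$3)^(snd (snd p))"

definition box3 :: "nat \<Rightarrow> (nat \<times> nat \<times> nat) set" where
  "box3 n = {..n} \<times> {..n} \<times> {..n}"

lemma evalF_alt: "evalF n c y = (\<Sum>p\<in>box3 n. c (fst p) (fst (snd p)) (snd (snd p)) * mon3 p y)"
  unfolding evalF_def box3_def
  by (simp add: sum.cartesian_product' mon3_def mult.assoc)

lemma finite_box3: "finite (box3 n)" by (simp add: box3_def)

lemma rep_mult:
  assumes "homog n c" "homog m d"
  shows "\<exists>e. homog (n + m) e \<and> (\<forall>y. evalF (n + m) e y = evalF n c y * evalF m d y)"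
proof -
  define cc where "cc p = c (fst p) (fst (snd p)) (snd (snd p))" for p
  define dd where "dd p = d (fst p) (fst (snd p)) (snd (snd p))" for p
  define pa where "pa x = (fst (fst x) + fst (snd x), fst (snd (fst x)) + fst (snd (snd x)),
       snd (snd (fst x)) + snd (snd (snd x)))" for x :: "(nat \<times> nat \<times> nat) \<times> (nat \<times> nat \<times> nat)"
  define e where "e i j k = (\<Sum>x\<in>box3 n \<times> box3 m. if pa x = (i,j,k) then cc (fst x) * dd (snd x) else 0)" for i j k
  have mon: "mon3 (pa x) y = mon3 (fst x) y * mon3 (snd x) y" for x y
    by (simp add: mon3_def pa_def power_add algebra_simps)
  have pin: "pa x \<in> box3 (n + m)" if "x \<in> box3 n \<times> box3 m" for x
    using that by (auto simp: pa_def box3_def)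
  have ev: "evalF (n + m) e y = evalF n c y * evalF m d y" for y
  proof -
    have "evalF n c y * evalF m d y = (\<Sum>p\<in>box3 n. \<Sum>q\<in>box3 m. (cc p * mon3 p y) * (dd q * mon3 q y))"
      by (simp add: evalF_alt cc_def dd_def sum_product)
    also have "\<dots> = (\<Sum>x\<in>box3 n \<times> box3 m. cc (fst x) * dd (snd x) * mon3 (pa x) y)"
      by (simp add: sum.cartesian_product mon case_prod_beta algebra_simps)
    also have "\<dots> = (\<Sum>x\<in>box3 n \<times> box3 m. \<Sum>z\<in>box3 (n+m). if pa x = z then cc (fst x) * dd (snd x) * mon3 z y else 0)"
    proof (rule sum.cong)
      fix x assume x: "x \<in> box3 n \<times> box3 m"
      show "cc (fst x) * dd (snd x) * mon3 (pa x) y =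
        (\<Sum>z\<in>box3 (n+m). if pa x = z then cc (fst x) * dd (snd x) * mon3 z y else 0)"
        using pin[OF x] by (simp add: sum.delta'[OF finite_box3])
    qed simp
    also have "\<dots> = (\<Sum>z\<in>box3 (n+m). \<Sum>x\<in>box3 n \<times> box3 m. if pa x = z then cc (fst x) * dd (snd x) * mon3 z y else 0)"
      by (rule sum.swap)
    also have "\<dots> = (\<Sum>z\<in>box3 (n+m). e (fst z) (fst (snd z)) (snd (snd z)) * mon3 z y)"
      by (rule sum.cong) (auto simp: e_def sum_distrib_right intro!: sum.cong)
    also have "\<dots> = evalF (n + m) e y" by (simp add: evalF_alt)
    finally show ?thesis by simp
  qed
  have "homog (n + m) e" unfolding homog_def
  proof (intro allI impI)
    fix i j k assume "e i j k \<noteq> 0"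
    then obtain x where x: "x \<in> box3 n \<times> box3 m"
      "(if pa x = (i,j,k) then cc (fst x) * dd (snd x) else 0) \<noteq> 0"
      unfolding e_def using sum.not_neutral_contains_not_neutral by blast
    then have "pa x = (i,j,k)" "cc (fst x) \<noteq> 0" "dd (snd x) \<noteq> 0" by (auto split: if_splits)
    moreover have "fst (fst x) + fst (snd (fst x)) + snd (snd (fst x)) = n"
      using \<open>cc (fst x) \<noteq> 0\<close> assms(1) unfolding homog_def cc_def by blast
    moreover have "fst (snd x) + fst (snd (snd x)) + snd (snd (snd x)) = m"
      using \<open>dd (snd x) \<noteq> 0\<close> assms(2) unfolding homog_def dd_def by blast
    ultimately show "i + j + k = n + m" unfolding pa_def by auto
  qed
  then show ?thesis using ev by blast
qed

lemma rep_pow: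
  assumes "homog n c"
  shows "\<exists>e. homog (p * n) e \<and> (\<forall>y. evalF (p * n) e y = (evalF n c y)^p)"
proof (induction p)
  case 0 then show ?case using rep_one by simp
next
  case (Suc p)
  then obtain e where "homog (p * n) e" "\<forall>y. evalF (p * n) e y = (evalF n c y)^p" by blast
  then obtain e' where "homog (n + p * n) e'" "\<forall>y. evalF (n + p * n) e' y = evalF n c y * evalF (p*n) e y"
    using rep_mult[OF assms] by blast
  then show ?case using \<open>\<forall>y. evalF (p * n) e y = _\<close> by (intro exI[of _ e']) simp
qed

lemma rep_prod:
  assumes "finite Z"
  shows "\<exists>c. homog (k * card Z) c \<and> (\<forall>y. evalF (k * card Z) c y = (\<Prod>Q\<in>Z. (dotc (a Q) y)^k))"
  using assms
proof (induction Z rule: finite_induct)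
  case empty then show ?case using rep_one by simp
next
  case (insert x F)
  then obtain c where c: "homog (k * card F) c" "\<forall>y. evalF (k * card F) c y = (\<Prod>Q\<in>F. (dotc (a Q) y)^k)"
    by blast
  obtain l where l: "homog 1 l" "\<forall>y. evalF 1 l y = dotc (a x) y" using rep_lin by blast
  obtain lk where lk: "homog (k * 1) lk" "\<forall>y. evalF (k * 1) lk y = (evalF 1 l y)^k" using rep_pow[OF l(1)] by blast
  obtain e where e: "homog (k * 1 + k * card F) e"
     "\<forall>y. evalF (k * 1 + k * card F) e y = evalF (k * 1) lk y * evalF (k * card F) c y"
    using rep_mult[OF lk(1) c(1)] by blast
  have "k * card (insert x F) = k * 1 + k * card F" using insert by simp
  then show ?case using e c lk l insert by (intro exI[of _ e]) simp
qed

lemma exists_nonzero_point: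
  assumes "finite Z" "\<forall>Q\<in>Z. a Q \<noteq> (0::complex^3)"
  shows "\<exists>y. \<forall>Q\<in>Z. dotc (a Q) y \<noteq> 0"
proof -
  define R where "R Q = {x. poly [:a Q $ 1, a Q $ 2, a Q $ 3:] x = 0}" for Q
  have "finite (R Q)" if "Q \<in> Z" for Q
  proof -
    have "[:a Q $ 1, a Q $ 2, a Q $ 3:] \<noteq> 0"
      using assms(2) that by (auto simp: vec_eq_iff forall_3)
    then show ?thesis unfolding R_def by (rule poly_roots_finite)
  qed
  then have "finite (\<Union>Q\<in>Z. R Q)" using assms(1) by blast
  then obtain x where x: "x \<notin> (\<Union>Q\<in>Z. R Q)"
    using ex_new_if_finite[OF infinite_UNIV_char_0[where 'a=complex]] by blast
  have "dotc (a Q) (vector [1, x, x^2]) = poly [:a Q $ 1, a Q $ 2, a Q $ 3:] x" for Q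
    by (simp add: dotc_def algebra_simps power2_eq_square)
  then show ?thesis using x unfolding R_def by (intro exI[of _ "vector [1, x, x^2]"]) auto
qed

lemma lin_base: "rep2 (\<lambda>s t. al + be * s + ga * t) (Fm (if al = 0 then 1 else 0))"
proof -
  have "rep2 (\<lambda>s t. al * s^0 * t^0 + be * s^1 * t^0 + ga * s^0 * t^1) ({(0,0)} \<union> {(1,0)} \<union> {(0,1)})"
    by (intro rep2_add rep2_monom)
  then have h: "rep2 (\<lambda>s t. al + be * s + ga * t) ({(0,0)} \<union> {(1,0)} \<union> {(0,1)})"
    by (rule rep2_ext) simp
  show ?thesis
  proof (cases "al = 0")
    case True
    have "rep2 (\<lambda>s t. be * s^1 * t^0 + ga * s^0 * t^1) ({(1,0)} \<union> {(0,1)})"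
      by (intro rep2_add rep2_monom)
    then have "rep2 (\<lambda>s t. al + be * s + ga * t) ({(1,0)} \<union> {(0,1)})"
      by (rule rep2_ext) (simp add: True)
    then show ?thesis using True by (auto simp: Fm_def elim!: rep2_mono)
  next
    case False then show ?thesis using h by (auto simp: Fm_def elim!: rep2_mono)
  qed
qed

lemma e1_base: "rep2 (\<lambda>s t. be * s + ga * (s * t)) (Fm (if be = 0 then 2 else 1))"
proof (cases "be = 0")
  case True
  have "rep2 (\<lambda>s t. ga * s^1 * t^1) {(1,1)}" by (rule rep2_monom)
  then have "rep2 (\<lambda>s t. be * s + ga * (s * t)) {(1,1)}" by (rule rep2_ext) (simp add: True)
  then show ?thesis using True by (auto simp: Fm_def elim!: rep2_mono)
next
  case False
  have "rep2 (\<lambda>s t. be * s^1 * t^0 + ga * s^1 * t^1) ({(1,0)} \<union> {(1,1)})"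
    by (intro rep2_add rep2_monom)
  then have "rep2 (\<lambda>s t. be * s + ga * (s * t)) ({(1,0)} \<union> {(1,1)})" by (rule rep2_ext) (simp add: mult.assoc)
  then show ?thesis using False by (auto simp: Fm_def elim!: rep2_mono)
qed

lemma Fm_anti: "b \<le> a \<Longrightarrow> Fm a \<subseteq> Fm b" unfolding Fm_def by auto

lemma prod_pow_rep2:
  assumes "finite Z" "\<forall>Q\<in>Z. rep2 (f Q) (Fm (lv Q))" "m \<le> (\<Sum>Q\<in>Z. k * lv Q)"
  shows "rep2 (\<lambda>s t. \<Prod>Q\<in>Z. (f Q s t)^k) (Fm m)"
proof -
  have "\<forall>Q\<in>Z. rep2 (\<lambda>s t. (f Q s t)^k) (Fm (k * lv Q))"
    using assms(2) rep2_pow_fam[OF Fm_fam] by blast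
  then have "rep2 (\<lambda>s t. \<Prod>Q\<in>Z. (f Q s t)^k) (Fm (\<Sum>Q\<in>Z. k * lv Q))"
    by (intro rep2_prod_fam[OF Fm_fam assms(1)])
  then show ?thesis using assms(3) Fm_anti by (blast intro: rep2_mono)
qed



lemma aff_T: "rep2 (\<lambda>s t. al + be * s + ga * t) (Tf 1)"
proof -
  have "rep2 (\<lambda>s t. al * s^0 * t^0 + be * s^1 * t^0 + ga * s^0 * t^1) ({(0,0)} \<union> {(1,0)} \<union> {(0,1)})"
    by (intro rep2_add rep2_monom)
  then have h: "rep2 (\<lambda>s t. al + be * s + ga * t) ({(0,0)} \<union> {(1,0)} \<union> {(0,1)})"
    by (rule rep2_ext) simp
  then show ?thesis by (auto simp: Tf_def elim!: rep2_mono)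
qed

lemma aff_W: "rep2 (\<lambda>s t. al + be * s + ga * (s * t)) (Wf 1)"
proof -
  have "rep2 (\<lambda>s t. al * s^0 * t^0 + be * s^1 * t^0 + ga * s^1 * t^1) ({(0,0)} \<union> {(1,0)} \<union> {(1,1)})"
    by (intro rep2_add rep2_monom)
  then have h: "rep2 (\<lambda>s t. al + be * s + ga * (s * t)) ({(0,0)} \<union> {(1,0)} \<union> {(1,1)})"
    by (rule rep2_ext) (simp add: mult.assoc)
  then show ?thesis by (auto simp: Wf_def elim!: rep2_mono)
qed

lemma crs_diff: "crs X (y - X) = crs X y"
  unfolding crs_def by (simp add: vec_eq_iff forall_3 algebra_simps)

lemma offE1_false:
  assumes h: "homog 3 c" and nz: "\<exists>i j k. c i j k \<noteq> 0" and m: "mult_P2_ge 3 c x 5"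
  shows False
proof -
  define X where "X = rep x"
  have X0: "X \<noteq> 0" using rep_nz X_def by simp
  have key: "evalF 3 c (X + e1) = 0" if e1: "crs X e1 \<noteq> 0" for e1
  proof -
    define e2 where "e2 = cnjv (crs X e1)"
    have "det3 X e1 e2 \<noteq> 0" using e1 dotc_cnjv by (simp add: det3_crs e2_def)
    then have "mult_ge0 (\<lambda>a b. evalF 3 c (X + a *s e1 + b *s e2)) 5"
      using m unfolding mult_P2_ge_def X_def by blast
    then have r1: "rep2 (\<lambda>a b. evalF 3 c (X + a *s e1 + b *s e2)) (Fm 5)"
      by (simp add: mult_ge0_rep2)
    have r2: "rep2 (\<lambda>a b. evalF 3 c (X + a *s e1 + b *s e2)) (Tf 3)"
    proof (rule chart_rep2[OF Tf_fam _ h])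
      fix r show "rep2 (\<lambda>a b. (X + a *s e1 + b *s e2) $ r) (Tf 1)"
        by (rule rep2_ext[OF aff_T[of "X$r" "e1$r" "e2$r"]]) (simp add: algebra_simps)
    qed
    have "Fm 5 \<inter> Tf 3 = {}" by (auto simp: Fm_def Tf_def)
    then have "rep2 (\<lambda>a b. evalF 3 c (X + a *s e1 + b *s e2)) {}"
      using rep2_inter[OF r1 r2] by simp
    from rep2_empty[OF this, of 1 0] show ?thesis by simp
  qed
  have k2: "evalF 3 c y = 0" if "crs X y \<noteq> 0" for y
    using key[of "y - X"] that by (simp add: crs_diff)
  have all: "evalF 3 c y = 0" for y
  proof -
    obtain z where z: "crs X z \<noteq> 0" using crs_nz_exists[OF X0] by blast
    then obtain r where r: "crs X z $ r \<noteq> 0" by (auto simp: vec_eq_iff)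
    define b where "b = - (crs X y $ r) / (crs X z $ r)"
    show ?thesis
    proof (rule perturb[of "{b}" _ _ y z])
      show "\<forall>e. e \<notin> {b} \<longrightarrow> evalF 3 c (y + e *s z) = 0"
      proof (intro allI impI)
        fix e assume "e \<notin> {b}"
        then have "e \<noteq> - (crs X y $ r) / (crs X z $ r)" by (simp add: b_def)
        then have "e * crs X z $ r \<noteq> - crs X y $ r" using r by (simp add: field_simps)
        then have "crs X y $ r + e * crs X z $ r \<noteq> 0" by (simp add: eq_neg_iff_add_eq_0 add.commute)
        then have "crs X (y + e *s z) $ r \<noteq> 0" by (simp add: crs_add crs_smult)
        then have "crs X (y + e *s z) \<noteq> 0" by auto
        then show "evalF 3 c (y + e *s z) = 0" by (rule k2)
      qed
    qed simp
  qed
  then show False using evalF_zero_coeffs[OF h] nz by blast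
qed

lemma qw_good:
  assumes "a \<noteq> 0" "v \<noteq> 0" "dotc a v = 0"
  shows "dotc a (crs a (cnjv v)) = 0" "det3 v (crs a (cnjv v)) (cnjv a) \<noteq> 0"
    "det3 v (crs a (cnjv v)) y = dotc v (cnjv v) * dotc a y"
proof -
  show "dotc a (crs a (cnjv v)) = 0" by (rule dotc_crs)
  show e: "det3 v (crs a (cnjv v)) y = dotc v (cnjv v) * dotc a y" for y
    using assms(3) by (simp add: det3_crs2 dotc_comm[of v a])
  show "det3 v (crs a (cnjv v)) (cnjv a) \<noteq> 0"
    using e[of "cnjv a"] dotc_cnjv assms(1,2) by simp
qed

lemma det3_lin:
  "det3 (y + e *s (v + q)) q w = det3 y q w + e * det3 v q w"
  "det3 v (y + e *s (v + q)) w = det3 v y w + e * det3 v q w"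
  "det3 v q (y + e *s (v + q)) = det3 v q y"
  unfolding det3_def by (simp_all add: algebra_simps)

lemma onE1_form:
  assumes h: "homog 3 c" and nz: "\<exists>i j k. c i j k \<noteq> 0"
    and a0: "a \<noteq> 0" and v0: "v \<noteq> 0" and av: "dotc a v = 0"
    and m: "\<forall>q w. dotc a q = 0 \<longrightarrow> det3 v q w \<noteq> 0 \<longrightarrow>
               mult_ge0 (\<lambda>s t. evalF 3 c (v + s *s q + (s*t) *s w)) 6"
  shows "\<exists>B. B \<noteq> 0 \<and> (\<forall>y. evalF 3 c y = B * (dotc a y)^3)"
proof -
  define q where "q = crs a (cnjv v)"
  define w where "w = cnjv a"
  define D where "D = det3 v q w"
  have qa: "dotc a q = 0" and D0: "D \<noteq> 0" and gq: "\<And>y. det3 v q y = dotc v (cnjv v) * dotc a y"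
    using qw_good[OF a0 v0 av] by (auto simp: q_def w_def D_def)
  define g where "g s t = evalF 3 c (v + s *s q + (s*t) *s w)" for s t
  have r1: "rep2 g (Fm 6)" using m qa D0 unfolding D_def g_def by (simp add: mult_ge0_rep2)
  have r2: "rep2 g (Wf 3)" unfolding g_def
  proof (rule chart_rep2[OF Wf_fam _ h])
    fix r show "rep2 (\<lambda>s t. (v + s *s q + (s*t) *s w) $ r) (Wf 1)"
      by (rule rep2_ext[OF aff_W[of "v$r" "q$r" "w$r"]]) (simp add: algebra_simps)
  qed
  have "Fm 6 \<inter> Wf 3 \<subseteq> {(3,3)}" by (auto simp: Fm_def Wf_def)
  then have "rep2 g {(3,3)}" using rep2_inter[OF r1 r2] rep2_mono by blast
  then obtain A where A: "\<And>s t. g s t = A * s^3 * t^3" using rep2_single by blast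
  define al where "al y = det3 y q w / D" for y
  define be where "be y = det3 v y w / D" for y
  define ga where "ga y = det3 v q y / D" for y
  have cl1: "evalF 3 c y = A * (ga y)^3" if "al y \<noteq> 0" "be y \<noteq> 0" for y
  proof -
    have y: "y = al y *s v + be y *s q + ga y *s w"
      using cramer[OF D0[unfolded D_def], of y] by (simp add: al_def be_def ga_def D_def)
    have "(1 / al y) *s y = v + (be y / al y) *s q + ((be y / al y) * (ga y / be y)) *s w"
      using that by (subst y) (simp add: vec_eq_iff forall_3 field_simps)
    then have "evalF 3 c ((1 / al y) *s y) = g (be y / al y) (ga y / be y)"
      by (simp add: g_def)
    then have "(1 / al y)^3 * evalF 3 c y = A * (be y / al y)^3 * (ga y / be y)^3"
      by (simp add: evalF_homog[OF h] A)
    then show ?thesis using that by (simp add: field_simps)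
  qed
  have cl2: "evalF 3 c y = A * (ga y)^3" for y
  proof (rule perturb[of "{- al y, - be y}" _ _ y "v + q"])
    show "\<forall>e. e \<notin> {- al y, - be y} \<longrightarrow> evalF 3 c (y + e *s (v + q)) = A * (ga y)^3"
    proof (intro allI impI)
      fix e assume e: "e \<notin> {- al y, - be y}"
      have "al (y + e *s (v + q)) = al y + e" unfolding al_def det3_lin using D0 by (simp add: D_def field_simps)
      moreover have "be (y + e *s (v + q)) = be y + e" unfolding be_def det3_lin using D0 by (simp add: D_def field_simps)
      moreover have "ga (y + e *s (v + q)) = ga y" unfolding ga_def det3_lin by simp
      ultimately show "evalF 3 c (y + e *s (v + q)) = A * (ga y)^3"
        using cl1[of "y + e *s (v + q)"] e by (auto simp: add_eq_0_iff)
    qed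
  qed simp
  define B where "B = A * (dotc v (cnjv v) / D)^3"
  have F: "evalF 3 c y = B * (dotc a y)^3" for y
    using cl2[of y] by (simp add: ga_def gq B_def power_mult_distrib power_divide)
  have "B \<noteq> 0"
  proof
    assume "B = 0"
    then have "\<forall>y. evalF 3 c y = 0" using F by simp
    then show False using evalF_zero_coeffs[OF h] nz by blast
  qed
  then show ?thesis using F by blast
qed

lemma mult_ge0_at0: "mult_ge0 g m \<Longrightarrow> 0 < m \<Longrightarrow> g 0 0 = 0"
  unfolding mult_ge0_def
proof (elim exE conjE)
  fix N a assume h: "\<forall>s t. g s t = (\<Sum>i\<le>N. \<Sum>j\<le>N. a i j * s ^ i * t ^ j)"
    "\<forall>i j. i + j < m \<longrightarrow> a i j = 0" and m: "0 < m"
  have a00: "a 0 0 = 0" using h(2)[rule_format, of 0 0] m by simp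
  have z: "a i j * 0 ^ i * 0 ^ j = 0" for i j
    using a00 by (cases "i = 0 \<and> j = 0") auto
  have "g 0 0 = (\<Sum>i\<le>N. \<Sum>j\<le>N. a i j * 0 ^ i * 0 ^ j)" using h(1) by blast
  also have "\<dots> = 0" by (simp only: z sum.neutral_const)
  finally show "g 0 0 = 0" .
qed



lemma exists_section:
  assumes fin: "finite Z" and S: "Z \<subseteq> S1 P1"
    and c1: "\<forall>Q\<in>Z. fst Q \<noteq> P1 \<longrightarrow> m \<le> 3*e"
    and c2: "\<forall>Q\<in>Z. fst Q = P1 \<longrightarrow> m + e * card Z \<le> 3*e*card Z + 3*e"
  shows "\<exists>c. section_dL1 P1 (e * card Z) c \<and> (\<forall>Q\<in>Z. mult_S1_ge P1 (e * card Z) c Q m)"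
proof -
  define aQ where "aQ Q = rep (snd Q)" for Q :: "proj2 \<times> proj2"
  obtain c where hc: "homog ((3*e) * card Z) c"
      "\<forall>y. evalF ((3*e) * card Z) c y = (\<Prod>Q\<in>Z. (dotc (aQ Q) y)^(3*e))"
    using rep_prod[OF fin, of "3*e" aQ] by blast
  have n: "3 * (e * card Z) = (3*e) * card Z" by simp
  define F where "F y = (\<Prod>Q\<in>Z. (dotc (aQ Q) y)^(3*e))" for y
  have ev: "evalF (3 * (e * card Z)) c y = F y" for y unfolding n F_def using hc(2) by blast
  have hom: "homog (3 * (e * card Z)) c" unfolding n by (rule hc(1))
  have inS: "on_line (fst Q) (snd Q) \<and> on_line P1 (snd Q)" if "Q \<in> Z" for Q
    using S that by (cases Q) (auto simp: S1_def)
  have av: "dotc (aQ Q) (rep P1) = 0" if "Q \<in> Z" for Q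
    using inS[OF that] by (simp add: on_line_def aQ_def)
  have ax: "dotc (aQ Q) (rep (fst Q)) = 0" if "Q \<in> Z" for Q
    using inS[OF that] by (simp add: on_line_def aQ_def)
  obtain y0 where y0: "\<forall>Q\<in>Z. dotc (aQ Q) y0 \<noteq> 0"
    using exists_nonzero_point[OF fin, of aQ] rep_nz by (auto simp: aQ_def)
  have "F y0 \<noteq> 0" using y0 fin by (simp add: F_def prod_zero_iff)
  then have nz: "\<exists>i j k. c i j k \<noteq> 0"
  proof (rule contrapos_np)
    assume "\<not> (\<exists>i j k. c i j k \<noteq> 0)"
    then have "evalF (3 * (e * card Z)) c y0 = 0" by (simp add: evalF_def)
    then show "F y0 = 0" using ev by simp
  qed
  have base_rep: "rep2 (\<lambda>s t. evalF (3 * (e * card Z)) c (X s t)) (Fm k)"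
    if "rep2 (\<lambda>s t. \<Prod>Q\<in>Z. (f Q s t)^(3*e)) (Fm k)" "\<And>Q s t. Q \<in> Z \<Longrightarrow> dotc (aQ Q) (X s t) = f Q s t"
    for X f k
    using that(1) by (rule rep2_ext) (simp add: ev F_def that(2) cong: prod.cong)
  have mP1: "mult_P2_ge (3 * (e * card Z)) c P1 (e * card Z)"
    unfolding mult_P2_ge_def
  proof (intro allI impI)
    fix e1 e2
    let ?f = "\<lambda>Q (a::complex) (b::complex). dotc (aQ Q) (rep P1) + dotc (aQ Q) e1 * a + dotc (aQ Q) e2 * b"
    have "rep2 (\<lambda>s t. \<Prod>Q\<in>Z. (?f Q s t)^(3*e)) (Fm (e * card Z))"
    proof (rule prod_pow_rep2[OF fin, of _ "\<lambda>_. 1"])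
      show "\<forall>Q\<in>Z. rep2 (?f Q) (Fm 1)"
      proof
        fix Q assume "Q \<in> Z"
        then have "dotc (aQ Q) (rep P1) = 0" by (rule av)
        then show "rep2 (?f Q) (Fm 1)" using lin_base[of "dotc (aQ Q) (rep P1)" "dotc (aQ Q) e1" "dotc (aQ Q) e2"] by simp
      qed
      show "e * card Z \<le> (\<Sum>Q\<in>Z. 3 * e * 1)" by simp
    qed
    then have "rep2 (\<lambda>s t. evalF (3 * (e * card Z)) c (rep P1 + s *s e1 + t *s e2)) (Fm (e * card Z))"
      by (rule base_rep) (simp add: dotc_add dotc_smult mult.commute)
    then show "mult_ge0 (\<lambda>a b. evalF (3 * (e * card Z)) c (rep P1 + a *s e1 + b *s e2)) (e * card Z)"
      by (simp add: mult_ge0_rep2)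
  qed
  have mQ: "mult_S1_ge P1 (e * card Z) c Q m" if Q: "Q \<in> Z" for Q
  proof (cases "fst Q = P1")
    case False
    have "mult_P2_ge (3 * (e * card Z)) c (fst Q) m"
      unfolding mult_P2_ge_def
    proof (intro allI impI)
      fix e1 e2
      let ?X = "rep (fst Q)"
      let ?f = "\<lambda>Q' (a::complex) (b::complex). dotc (aQ Q') ?X + dotc (aQ Q') e1 * a + dotc (aQ Q') e2 * b"
      let ?lv = "\<lambda>Q'. if dotc (aQ Q') ?X = 0 then 1 else 0::nat"
      have "rep2 (\<lambda>s t. \<Prod>Q'\<in>Z. (?f Q' s t)^(3*e)) (Fm m)"
      proof (rule prod_pow_rep2[OF fin, of _ ?lv])
        show "\<forall>Q'\<in>Z. rep2 (?f Q') (Fm (?lv Q'))" using lin_base by blast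
        have "3 * e * ?lv Q \<le> (\<Sum>Q'\<in>Z. 3 * e * ?lv Q')"
          by (rule member_le_sum[OF Q]) (auto simp: fin)
        then show "m \<le> (\<Sum>Q'\<in>Z. 3 * e * ?lv Q')" using ax[OF Q] c1 Q False by auto
      qed
      then have "rep2 (\<lambda>s t. evalF (3 * (e * card Z)) c (?X + s *s e1 + t *s e2)) (Fm m)"
        by (rule base_rep) (simp add: dotc_add dotc_smult mult.commute)
      then show "mult_ge0 (\<lambda>a b. evalF (3 * (e * card Z)) c (?X + a *s e1 + b *s e2)) m"
        by (simp add: mult_ge0_rep2)
    qed
    then show ?thesis using False by (simp add: mult_S1_ge_def)
  next
    case True
    have "mult_ge0 (\<lambda>s t. evalF (3 * (e * card Z)) c (rep P1 + s *s q + (s*t) *s w)) (m + e * card Z)"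
      if qQ: "dotc (rep (snd Q)) q = 0" for q w
    proof -
      let ?f = "\<lambda>Q' (s::complex) (t::complex). dotc (aQ Q') q * s + dotc (aQ Q') w * (s * t)"
      let ?lv = "\<lambda>Q'. if dotc (aQ Q') q = 0 then 2 else 1::nat"
      have "rep2 (\<lambda>s t. \<Prod>Q'\<in>Z. (?f Q' s t)^(3*e)) (Fm (m + e * card Z))"
      proof (rule prod_pow_rep2[OF fin, of _ ?lv])
        show "\<forall>Q'\<in>Z. rep2 (?f Q') (Fm (?lv Q'))" using e1_base by blast
        have "(\<Sum>Q'\<in>Z. (1 + (if Q' = Q then 1 else 0))) \<le> (\<Sum>Q'\<in>Z. ?lv Q')"
          by (rule sum_mono) (use qQ in \<open>auto simp: aQ_def\<close>)
        moreover have "(\<Sum>Q'\<in>Z. (1 + (if Q' = Q then 1 else 0::nat))) = card Z + 1"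
          unfolding sum.distrib using fin Q by simp
        ultimately have "card Z + 1 \<le> (\<Sum>Q'\<in>Z. ?lv Q')" by simp
        then have "3 * e * (card Z + 1) \<le> 3 * e * (\<Sum>Q'\<in>Z. ?lv Q')" by (rule mult_le_mono2)
        moreover have "(\<Sum>Q'\<in>Z. 3 * e * ?lv Q') = 3 * e * (\<Sum>Q'\<in>Z. ?lv Q')"
          by (simp add: sum_distrib_left)
        moreover have "m + e * card Z \<le> 3 * e * (card Z + 1)"
        proof -
          have "m + e * card Z \<le> 3*e*card Z + 3*e" using c2 Q True by blast
          then show ?thesis by (simp add: algebra_simps)
        qed
        ultimately show "m + e * card Z \<le> (\<Sum>Q'\<in>Z. 3 * e * ?lv Q')" by linarith
      qed
      then have "rep2 (\<lambda>s t. evalF (3 * (e * card Z)) c (rep P1 + s *s q + (s*t) *s w)) (Fm (m + e * card Z))"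
        by (rule base_rep) (use av in \<open>simp add: dotc_add dotc_smult mult.commute\<close>)
      then show ?thesis by (simp add: mult_ge0_rep2)
    qed
    then show ?thesis using True by (simp add: mult_S1_ge_def)
  qed
  have "section_dL1 P1 (e * card Z) c" unfolding section_dL1_def using hom nz mP1 by blast
  then show ?thesis using mQ by blast
qed

lemma no_d0:
  assumes Q: "Q \<in> Z" and S: "Z \<subseteq> S1 P1" and m: "0 < m" and sec: "section_dL1 P1 0 c"
    and mm: "\<forall>Q\<in>Z. mult_S1_ge P1 0 c Q m"
  shows False
proof -
  have h: "homog 0 c" "\<exists>i j k. c i j k \<noteq> 0" using sec by (auto simp: section_dL1_def)
  have c0: "c 0 0 0 \<noteq> 0" using h by (auto simp: homog_def)
  have ev: "evalF 0 c y = c 0 0 0" for y by (simp add: evalF_def)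
  have mQ: "mult_S1_ge P1 0 c Q m" using mm Q by blast
  show False
  proof (cases "fst Q = P1")
    case False
    define X where "X = rep (fst Q)"
    obtain z where z: "crs X z \<noteq> 0" using crs_nz_exists rep_nz X_def by blast
    have "det3 X z (cnjv (crs X z)) \<noteq> 0" using z dotc_cnjv by (simp add: det3_crs)
    then have "mult_ge0 (\<lambda>a b. evalF 0 c (X + a *s z + b *s cnjv (crs X z))) m"
      using mQ False by (simp add: mult_S1_ge_def mult_P2_ge_def X_def)
    then have "evalF 0 c (X + 0 *s z + 0 *s cnjv (crs X z)) = 0" using m by (rule mult_ge0_at0)
    then show False using ev c0 by simp
  next
    case True
    have av: "dotc (rep (snd Q)) (rep P1) = 0" using Q S by (cases Q) (auto simp: S1_def on_line_def)
    note qw = qw_good[OF rep_nz rep_nz av]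
    then have "mult_ge0 (\<lambda>s t. evalF 0 c (rep P1 + s *s crs (rep (snd Q)) (cnjv (rep P1))
        + (s*t) *s cnjv (rep (snd Q)))) (m + 0)"
      using mQ True by (simp add: mult_S1_ge_def)
    then have "evalF 0 c (rep P1 + 0 *s crs (rep (snd Q)) (cnjv (rep P1)) + (0*0) *s cnjv (rep (snd Q))) = 0"
      using m by (intro mult_ge0_at0[of _ "m + 0"]) auto
    then show False using ev c0 by simp
  qed
qed

lemma alpha_one:
  assumes "Q \<in> Z" "Z \<subseteq> S1 P1" "0 < m"
    and "\<exists>c. section_dL1 P1 1 c \<and> (\<forall>Q\<in>Z. mult_S1_ge P1 1 c Q m)"
  shows "alpha P1 Z m = 1"
  unfolding alpha_def
proof (rule Least_equality)
  show "\<exists>c. section_dL1 P1 1 c \<and> (\<forall>Q\<in>Z. mult_S1_ge P1 1 c Q m)" by (rule assms(4))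
next
  fix y assume "\<exists>c. section_dL1 P1 y c \<and> (\<forall>Q\<in>Z. mult_S1_ge P1 y c Q m)"
  then show "1 \<le> y" using no_d0[OF assms(1,2,3)] by (cases y) auto
qed

theorem theorem1:
  fixes P1 :: proj2 and Z :: "(proj2 \<times> proj2) set"
  assumes "finite Z" and "Z \<noteq> {}" and "Z \<subseteq> S1 P1"
  shows "(\<exists>Q \<in> E1 P1. Z = {Q}) \<longleftrightarrow>
         (alpha P1 Z 1 = 1 \<and> alpha P1 Z 2 = 1 \<and> alpha P1 Z 3 = 1 \<and>
          alpha P1 Z 4 = 1 \<and> alpha P1 Z 5 = 1)"
proof
  assume "\<exists>Q \<in> E1 P1. Z = {Q}"
  then obtain Q where Q: "Q \<in> E1 P1" "Z = {Q}" by blast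
  then have fQ: "fst Q = P1" by (cases Q) (auto simp: E1_def)
  have P: "\<exists>c. section_dL1 P1 1 c \<and> (\<forall>Q'\<in>Z. mult_S1_ge P1 1 c Q' m)" if "m \<le> 5" for m
    using exists_section[OF assms(1) assms(3), of m 1] Q fQ that by simp
  have "alpha P1 Z m = 1" if "0 < m" "m \<le> 5" for m
    using alpha_one[OF _ assms(3) that(1) P[OF that(2)], of Q] Q by simp
  then show "alpha P1 Z 1 = 1 \<and> alpha P1 Z 2 = 1 \<and> alpha P1 Z 3 = 1 \<and>
          alpha P1 Z 4 = 1 \<and> alpha P1 Z 5 = 1" by simp
next
  assume al: "alpha P1 Z 1 = 1 \<and> alpha P1 Z 2 = 1 \<and> alpha P1 Z 3 = 1 \<and>
          alpha P1 Z 4 = 1 \<and> alpha P1 Z 5 = 1"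
  define Pr where "Pr d = (\<exists>c. section_dL1 P1 d c \<and> (\<forall>Q\<in>Z. mult_S1_ge P1 d c Q 5))" for d
  have "\<exists>d. Pr d" using exists_section[OF assms(1) assms(3), of 5 2] unfolding Pr_def by auto
  then have "Pr (LEAST d. Pr d)" by (rule LeastI_ex)
  moreover have "(LEAST d. Pr d) = 1" using al unfolding alpha_def Pr_def by simp
  ultimately obtain c where c: "section_dL1 P1 1 c" "\<forall>Q\<in>Z. mult_S1_ge P1 1 c Q 5"
    unfolding Pr_def by auto
  have h: "homog 3 c" "\<exists>i j k. c i j k \<noteq> 0" using c(1) by (simp_all add: section_dL1_def)
  have fst: "fst Q = P1" if "Q \<in> Z" for Q
  proof (rule ccontr)
    assume "fst Q \<noteq> P1"
    moreover have "mult_S1_ge P1 1 c Q 5" using c(2) that by blast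
    ultimately have "mult_P2_ge 3 c (fst Q) 5" unfolding mult_S1_ge_def by simp
    then show False using offE1_false h by blast
  qed
  have form: "\<exists>B. B \<noteq> 0 \<and> (\<forall>y. evalF 3 c y = B * (dotc (rep (snd Q)) y)^3)" if "Q \<in> Z" for Q
  proof (rule onE1_form[OF h(1) h(2) rep_nz rep_nz])
    show "dotc (rep (snd Q)) (rep P1) = 0" using that assms(3) by (cases Q) (auto simp: S1_def on_line_def)
    show "\<forall>q w. dotc (rep (snd Q)) q = 0 \<longrightarrow> det3 (rep P1) q w \<noteq> 0 \<longrightarrow>
        mult_ge0 (\<lambda>s t. evalF 3 c (rep P1 + s *s q + (s * t) *s w)) 6"
    proof -
      have "mult_S1_ge P1 1 c Q 5" using c(2) that by blast
      then show ?thesis using fst[OF that] unfolding mult_S1_ge_def by simp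
    qed
  qed
  obtain Q0 where Q0: "Q0 \<in> Z" using assms(2) by blast
  have eq: "Q = Q0" if Q: "Q \<in> Z" for Q
  proof -
    obtain B where B: "B \<noteq> 0" "\<forall>y. evalF 3 c y = B * (dotc (rep (snd Q)) y)^3" using form[OF Q] by blast
    obtain B0 where B0: "B0 \<noteq> 0" "\<forall>y. evalF 3 c y = B0 * (dotc (rep (snd Q0)) y)^3" using form[OF Q0] by blast
    have "\<forall>y. dotc (rep (snd Q0)) y = 0 \<longleftrightarrow> dotc (rep (snd Q)) y = 0"
    proof
      fix y
      have "B0 * (dotc (rep (snd Q0)) y)^3 = B * (dotc (rep (snd Q)) y)^3" using B B0 by metis
      then show "dotc (rep (snd Q0)) y = 0 \<longleftrightarrow> dotc (rep (snd Q)) y = 0" using B(1) B0(1) by auto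
    qed
    then obtain mu where "rep (snd Q) = mu *s rep (snd Q0)" using ker_prop[OF rep_nz] by blast
    then have "snd Q = snd Q0" by (rule rep_prop_eq)
    moreover have "fst Q = fst Q0" using fst Q Q0 by simp
    ultimately show "Q = Q0" by (simp add: prod_eq_iff)
  qed
  then have "Z = {Q0}" using Q0 by blast
  moreover have "Q0 \<in> E1 P1"
  proof -
    have "Q0 \<in> S1 P1" using Q0 assms(3) by blast
    then have "on_line P1 (snd Q0)" by (cases Q0) (simp add: S1_def)
    then show ?thesis using fst[OF Q0] by (cases Q0) (simp add: E1_def)
  qed
  ultimately show "\<exists>Q\<in>E1 P1. Z = {Q}" by blast
qed

end
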